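(* Let $\lambda=(\lambda_1,\ldots,\lambda_n)\in\mathbb{C}^n$ have strictly negative real parts and let $C_\lambda$ be the associated real companion matrix. Let $D\in\mathbb{R}^{r\times nm}$ be such that the pair $(C_\lambda\otimes I_{m\times m},D)$ is observable, and let $P\in\mathbb{R}^{nm\times nm}$ be the unique symmetric positive definite solution of $$(C_\lambda\otimes I_{m\times m})^{T}P+P(C_\lambda\otimes I_{m\times m})+D^{T}D=0.$$ Let $x(t)\in\mathbb{R}^m$ solve $x^{(n)}=-\sum_{k=0}^{n-1}\kappa_{k,\lambda}x^{(k)}$ from the initial state $z_0=(x_0^{(0)},\ldots,x_0^{(n-1)})$, viewed as a vector in $\mathbb{R}^{nm}$ by stacking $x_0^{(0)},\ldots,x_0^{(n-1)}$. Then for all $t\ge 0$, $$x(t)\in\mathcal{E}\big(0,\ I_{m\times nm}P^{-1}I_{nm\times m},\ \|z_0\|_P\big).$$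
   Context: The coefficients $\kappa_{k,\lambda}\in\mathbb{R}$ are defined by $\prod_{i=1}^n(s-\lambda_i)=s^n+\sum_{k=0}^{n-1}\kappa_{k,\lambda}s^k$. $C_\lambda$ is the $n\times n$ matrix with $(C_\lambda)_{i,i+1}=1$ for $i=1,\ldots,n-1$, last row $[-\kappa_{0,\lambda},\ldots,-\kappa_{n-1,\lambda}]$, zeros elsewhere; with the stacked state $z=(x^{(0)},\ldots,x^{(n-1)})\in\mathbb{R}^{nm}$ the system reads $\dot z=(C_\lambda\otimes I_{m\times m})z$. $\otimes$ is the Kronecker product; $I_{m\times nm}=[I_m\ 0\ \cdots\ 0]$ and $I_{nm\times m}=I_{m\times nm}^T$. $\|z\|_P=\sqrt{z^TPz}$. For $c\in\mathbb{R}^m$, a symmetric positive semidefinite $\Sigma$ and $\rho\ge 0$, $\mathcal{E}(c,\Sigma,\rho)=\{c+\rho\,\Sigma^{1/2}u: u\in\mathbb{R}^m,\ \|u\|\le 1\}$ with $\Sigma^{1/2}$ the symmetric positive semidefinite square root. *)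

theory Defs
  imports "Jordan_Normal_Form.Matrix" "HOL-Computational_Algebra.Polynomial" Complex_Main
begin

text \<open>Indices of lambda are 0..n-1 (lam 0 = lambda_1, ...).  Taken as the real part of the
  complex coefficient; the statement separately assumes these coefficients are real.\<close>
definition charpoly_lam :: "nat \<Rightarrow> (nat \<Rightarrow> complex) \<Rightarrow> complex poly" where
  "charpoly_lam n lam = (\<Prod>i<n. [:- lam i, 1:])"

definition kappa :: "nat \<Rightarrow> (nat \<Rightarrow> complex) \<Rightarrow> nat \<Rightarrow> real" where
  "kappa n lam k = Re (coeff (charpoly_lam n lam) k)"

definition companion :: "nat \<Rightarrow> (nat \<Rightarrow> complex) \<Rightarrow> real mat" where
  "companion n lam = mat n n (\<lambda>(i, j).
     if i = n - 1 then - kappa n lam j else if j = i + 1 then 1 else 0)"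

definition kron :: "real mat \<Rightarrow> real mat \<Rightarrow> real mat" where
  "kron A B = mat (dim_row A * dim_row B) (dim_col A * dim_col B)
     (\<lambda>(p, q). A $$ (p div dim_row B, q div dim_col B) * B $$ (p mod dim_row B, q mod dim_col B))"

text \<open>I_{m x nm} = [I_m 0 ... 0] and I_{nm x m} its transpose.\<close>
definition I_sel :: "nat \<Rightarrow> nat \<Rightarrow> real mat" where
  "I_sel m N = mat m N (\<lambda>(i, j). if i = j then 1 else 0)"

text \<open>Observability of the pair (A, D) with A of size N x N: the unobservable subspace
  (common kernel of D A^k, k < N, i.e. kernel of the Kalman observability matrix) is trivial,
  i.e. the observability matrix has full column rank N.\<close>
definition observable :: "nat \<Rightarrow> real mat \<Rightarrow> real mat \<Rightarrow> bool" where
  "observable N A D \<longleftrightarrow>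
     (\<forall>v \<in> carrier_vec N. (\<forall>k<N. D *\<^sub>v ((A ^\<^sub>m k) *\<^sub>v v) = 0\<^sub>v (dim_row D)) \<longrightarrow> v = 0\<^sub>v N)"

definition sym_mat :: "real mat \<Rightarrow> bool" where
  "sym_mat A \<longleftrightarrow> transpose_mat A = A"

definition pos_def :: "nat \<Rightarrow> real mat \<Rightarrow> bool" where
  "pos_def N A \<longleftrightarrow> A \<in> carrier_mat N N \<and> sym_mat A \<and>
     (\<forall>v \<in> carrier_vec N. v \<noteq> 0\<^sub>v N \<longrightarrow> v \<bullet> (A *\<^sub>v v) > 0)"

definition pos_semidef :: "nat \<Rightarrow> real mat \<Rightarrow> bool" where
  "pos_semidef N A \<longleftrightarrow> A \<in> carrier_mat N N \<and> sym_mat A \<and>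
     (\<forall>v \<in> carrier_vec N. v \<bullet> (A *\<^sub>v v) \<ge> 0)"

definition mat_inv :: "nat \<Rightarrow> real mat \<Rightarrow> real mat" where
  "mat_inv N A = (THE B. B \<in> carrier_mat N N \<and> A * B = 1\<^sub>m N \<and> B * A = 1\<^sub>m N)"

definition psd_sqrt :: "nat \<Rightarrow> real mat \<Rightarrow> real mat" where
  "psd_sqrt N S = (THE R. pos_semidef N R \<and> R * R = S)"

definition ellipsoid :: "nat \<Rightarrow> real vec \<Rightarrow> real mat \<Rightarrow> real \<Rightarrow> real vec set" where
  "ellipsoid m c Sig rho =
     {c + rho \<cdot>\<^sub>v (psd_sqrt m Sig *\<^sub>v u) | u. u \<in> carrier_vec m \<and> sqrt (u \<bullet> u) \<le> 1}"

definition P_norm :: "real mat \<Rightarrow> real vec \<Rightarrow> real" where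
  "P_norm P z = sqrt (z \<bullet> (P *\<^sub>v z))"

end

theory Submission
  imports Defs "Jordan_Normal_Form.Spectral_Radius"
begin


lemma sym_real_eigenvector:
  fixes A :: "real mat"
  assumes A: "A \<in> carrier_mat n n" and sym: "transpose_mat A = A" and n: "n > 0"
  shows "\<exists>e v. v \<in> carrier_vec n \<and> v \<noteq> 0\<^sub>v n \<and> A *\<^sub>v v = e \<cdot>\<^sub>v v"
proof -
  define Ac where "Ac = map_mat complex_of_real A"
  have Ac: "Ac \<in> carrier_mat n n" using A by (simp add: Ac_def)
  from spectrum_non_empty[OF Ac n] obtain c where "eigenvalue Ac c" unfolding spectrum_def by auto
  then obtain w where w: "w \<in> carrier_vec n" "w \<noteq> 0\<^sub>v n" "Ac *\<^sub>v w = c \<cdot>\<^sub>v w"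
    unfolding eigenvalue_def eigenvector_def using Ac by auto
  have symA: "\<And>i j. i < n \<Longrightarrow> j < n \<Longrightarrow> A $$ (j, i) = A $$ (i, j)"
    using sym A by (metis carrier_matD index_transpose_mat(1))
  define s where "s = (\<Sum>i<n. cnj (w$i) * (Ac *\<^sub>v w) $ i)"
  have cn: "\<And>z. cnj z * z = (complex_of_real (cmod z))^2"
    by (metis complex_norm_square mult.commute of_real_power)
  have s1: "s = c * of_real (\<Sum>i<n. (cmod (w$i))^2)"
    unfolding s_def w(3) using w(1)
    by (auto simp: sum_distrib_left cn intro!: sum.cong)
  have s2: "s = (\<Sum>i<n. \<Sum>j<n. cnj (w$i) * of_real (A $$ (i,j)) * w$j)"
    unfolding s_def using w(1) A Ac
    by (auto simp: Ac_def mult_mat_vec_def scalar_prod_def sum_distrib_left atLeast0LessThan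
        intro!: sum.cong)
  have "cnj s = (\<Sum>i<n. \<Sum>j<n. w$i * of_real (A $$ (i,j)) * cnj (w$j))"
    unfolding s2 by simp
  also have "\<dots> = (\<Sum>j<n. \<Sum>i<n. w$i * of_real (A $$ (i,j)) * cnj (w$j))"
    by (rule sum.swap)
  also have "\<dots> = s"
    unfolding s2 using symA by (auto intro!: sum.cong simp: ac_simps)
  finally have "Im s = 0" by (metis cnj.simps(2) neg_equal_zero)
  have "\<exists>i<n. w $ i \<noteq> 0"
    using w(1,2) by (metis carrier_vecD eq_vecI index_zero_vec(1) index_zero_vec(2))
  then obtain i0 where i0: "i0 < n" "w $ i0 \<noteq> 0" by auto
  have pos: "(\<Sum>i<n. (cmod (w$i))^2) > 0"
    by (rule sum_pos2[of _ i0]) (use i0 in auto)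
  have "Im c = 0"
    using \<open>Im s = 0\<close> pos unfolding s1 by (simp)
  hence c: "c = of_real (Re c)" by (simp add: complex_eq_iff)
  have "poly (char_poly Ac) c = 0"
    using eigenvalue_root_char_poly[OF Ac] \<open>eigenvalue Ac c\<close> by auto
  hence "poly (map_poly of_real (char_poly A)) (of_real (Re c) :: complex) = 0"
    using of_real_hom.char_poly_hom[OF A] c unfolding Ac_def by metis
  hence "poly (char_poly A) (Re c) = 0" by simp
  hence "eigenvalue A (Re c)" using eigenvalue_root_char_poly[OF A] by auto
  thus ?thesis unfolding eigenvalue_def eigenvector_def using A by auto
qed



lemma householder:
  fixes v :: "real vec"
  assumes v: "v \<in> carrier_vec n" and vv: "v \<bullet> v = 1" and n: "n > 0"
  shows "\<exists>H \<in> carrier_mat n n. transpose_mat H * H = 1\<^sub>m n \<and> H * transpose_mat H = 1\<^sub>m n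
          \<and> (\<forall>i<n. H $$ (i,0) = v $ i)"
proof (cases "v = unit_vec n 0")
  case True
  show ?thesis
    by (rule bexI[of _ "1\<^sub>m n"]) (use True n in auto)
next
  case False
  define u where "u = vec n (\<lambda>i. v $ i - (if i = 0 then 1 else 0))"
  define c where "c = (\<Sum>k<n. (u$k)^2)"
  define a where "a = 2 / c"
  have uk: "\<And>k. k < n \<Longrightarrow> u $ k = v $ k - (if k = 0 then 1 else 0)" unfolding u_def by simp
  have vv': "(\<Sum>k<n. (v$k)^2) = 1" using vv v unfolding scalar_prod_def
    by (simp add: power2_eq_square atLeast0LessThan)
  have "\<exists>k<n. u $ k \<noteq> 0"
  proof (rule ccontr)
    assume "\<not> ?thesis"
    hence "v = unit_vec n 0" using v n by (intro eq_vecI) (auto simp: uk unit_vec_def)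
    thus False using False by simp
  qed
  then obtain k0 where k0: "k0 < n" "u $ k0 \<noteq> 0" by auto
  have cpos: "c > 0" unfolding c_def by (rule sum_pos2[of _ k0]) (use k0 in auto)
  have "c = (\<Sum>k<n. (v$k)^2 - 2 * (if k = 0 then v $ k else 0) + (if k = 0 then 1 else 0))"
    unfolding c_def by (rule sum.cong) (auto simp: uk power2_eq_square algebra_simps)
  also have "\<dots> = 2 - 2 * v $ 0"
    using n vv' by (simp add: sum.distrib sum_subtractf sum_distrib_left[symmetric])
  finally have c2: "c = - 2 * u $ 0" using uk[OF n] by simp
  have au0: "a * u $ 0 = -1" unfolding a_def c2 using cpos c2 by (simp add: field_simps)
  have ac: "a * a * c = 2 * a" unfolding a_def using cpos by (simp add: field_simps)
  define H where "H = mat n n (\<lambda>(i,j). (if i = j then 1 else 0) - a * u$i * u$j)"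
  have H: "H \<in> carrier_mat n n" unfolding H_def by simp
  have Ht: "transpose_mat H = H" unfolding H_def by (rule eq_matI) auto
  have HH: "H * H = 1\<^sub>m n"
  proof (rule eq_matI)
    fix i j assume i: "i < dim_row (1\<^sub>m n :: real mat)" and j: "j < dim_col (1\<^sub>m n :: real mat)"
    hence i: "i < n" and j: "j < n" by auto
    have "(H * H) $$ (i,j) = (\<Sum>k<n. ((if i = k then 1 else 0) - a * u$i * u$k) * ((if k = j then 1 else 0) - a * u$k * u$j))"
      using i j unfolding H_def by (simp add: scalar_prod_def atLeast0LessThan row_def col_def)
    also have "\<dots> = (\<Sum>k<n. (if k = i then (if i = j then 1 else 0) else 0)
         - (if k = i then a * u$k * u$j else 0) - (if k = j then a * u$i * u$k else 0)
         + a * a * u$i * u$j * (u$k)^2)"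
      by (rule sum.cong) (auto simp: algebra_simps power2_eq_square)
    also have "\<dots> = (if i = j then 1 else 0) - a * u$i * u$j - a * u$i * u$j + a * a * u$i * u$j * c"
      using i j by (simp add: sum.distrib sum_subtractf sum_distrib_left[symmetric] c_def)
    also have "\<dots> = (if i = j then 1 else 0) - 2 * a * u$i * u$j + (a * a * c) * u$i * u$j"
      by (simp add: algebra_simps)
    also have "\<dots> = (if i = j then 1 else 0)" unfolding ac by simp
    finally show "(H * H) $$ (i,j) = 1\<^sub>m n $$ (i,j)" using i j by simp
  qed (use H in auto)
  have col0: "\<forall>i<n. H $$ (i,0) = v $ i"
  proof (intro allI impI)
    fix i assume i: "i < n"
    have "H $$ (i,0) = (if i = 0 then 1 else 0) - (a * u$0) * u$i" unfolding H_def using i n by simp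
    also have "\<dots> = v $ i" using au0 uk[OF i] by simp
    finally show "H $$ (i,0) = v $ i" .
  qed
  show ?thesis by (rule bexI[of _ H]) (use H HH Ht col0 in simp_all)
qed



lemma vec_pos_self: fixes w :: "real vec"
  assumes "w \<in> carrier_vec n" "w \<noteq> 0\<^sub>v n" shows "w \<bullet> w > 0"
proof -
  have "\<exists>i<n. w $ i \<noteq> 0"
    using assms by (metis carrier_vecD eq_vecI index_zero_vec(1) index_zero_vec(2))
  then obtain i0 where i0: "i0 < n" "w $ i0 \<noteq> 0" by auto
  have "(\<Sum>i\<in>{0..<n}. w $ i * w $ i) > 0"
    by (rule sum_pos2[of _ i0]) (use i0 in \<open>auto simp: zero_less_mult_iff linorder_neq_iff\<close>)
  thus ?thesis using assms(1) unfolding scalar_prod_def by simp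
qed

lemma assoc4: fixes A B C D :: "'a::semiring_1 mat"
  assumes "A \<in> carrier_mat n n" "B \<in> carrier_mat n n" "C \<in> carrier_mat n n" "D \<in> carrier_mat n n"
  shows "(A * B) * (C * D) = A * (B * C) * D"
proof -
  have "(A * B) * (C * D) = A * (B * (C * D))" using assms by (meson assoc_mult_mat mult_carrier_mat)
  also have "B * (C * D) = (B * C) * D" using assoc_mult_mat[OF assms(2,3,4)] by simp
  also have "A * ((B * C) * D) = A * (B * C) * D" using assms by (metis assoc_mult_mat mult_carrier_mat)
  finally show ?thesis .
qed

lemma assoc5: fixes A B C D E :: "'a::semiring_1 mat"
  assumes "A \<in> carrier_mat n n" "B \<in> carrier_mat n n" "C \<in> carrier_mat n n" "D \<in> carrier_mat n n"
    "E \<in> carrier_mat n n"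
  shows "(A * B) * C * (D * E) = A * (B * C * D) * E"
proof -
  have "(A * B) * C = A * (B * C)" using assms by (meson assoc_mult_mat)
  hence "(A * B) * C * (D * E) = (A * (B * C)) * (D * E)" by simp
  also have "\<dots> = A * (B * C * D) * E" using assms by (intro assoc4) auto
  finally show ?thesis .
qed

lemma spectral:
  fixes A :: "real mat"
  assumes "A \<in> carrier_mat n n" "transpose_mat A = A"
  shows "\<exists>Q \<in> carrier_mat n n. transpose_mat Q * Q = 1\<^sub>m n \<and> Q * transpose_mat Q = 1\<^sub>m n
           \<and> diagonal_mat (transpose_mat Q * A * Q)"
  using assms
proof (induction n arbitrary: A)
  case 0
  show ?case by (rule bexI[of _ "1\<^sub>m 0"]) (auto simp: diagonal_mat_def)
next
  case (Suc n A)
  have A: "A \<in> carrier_mat (Suc n) (Suc n)" and sym: "transpose_mat A = A" by fact+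
  obtain e w where w: "w \<in> carrier_vec (Suc n)" "w \<noteq> 0\<^sub>v (Suc n)" "A *\<^sub>v w = e \<cdot>\<^sub>v w"
    using sym_real_eigenvector[OF A sym] by auto
  define v where "v = (1 / sqrt (w \<bullet> w)) \<cdot>\<^sub>v w"
  have ww: "w \<bullet> w > 0" by (rule vec_pos_self[OF w(1,2)])
  have v: "v \<in> carrier_vec (Suc n)" unfolding v_def using w by simp
  have vv: "v \<bullet> v = 1" unfolding v_def using w(1) ww
    by (simp add: real_sqrt_mult[symmetric])
  have Av: "A *\<^sub>v v = e \<cdot>\<^sub>v v" unfolding v_def using w A
    by (simp add: mult_mat_vec smult_smult_assoc mult.commute)
  obtain H where H: "H \<in> carrier_mat (Suc n) (Suc n)" "transpose_mat H * H = 1\<^sub>m (Suc n)"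
    "H * transpose_mat H = 1\<^sub>m (Suc n)" "\<forall>i<Suc n. H $$ (i,0) = v $ i"
    using householder[OF v vv] by auto
  have colH: "col H 0 = v" using H(1,4) v by (intro eq_vecI) auto
  define A' where "A' = transpose_mat H * A * H"
  have A': "A' \<in> carrier_mat (Suc n) (Suc n)" unfolding A'_def using H A by auto
  have symA': "transpose_mat A' = A'"
  proof -
    have e1: "A' = transpose_mat H * (A * H)" unfolding A'_def
      by (rule assoc_mult_mat) (use H A in auto)
    have "transpose_mat A' = transpose_mat (A * H) * H" unfolding e1
      by (subst transpose_mult[of _ "Suc n" "Suc n"]) (use H A in auto)
    also have "transpose_mat (A * H) = transpose_mat H * A"
      by (subst transpose_mult[of _ "Suc n" "Suc n"]) (use H A sym in auto)
    finally show ?thesis unfolding A'_def .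
  qed
  have A'0: "A' $$ (i,0) = (if i = 0 then e else 0)" if i: "i < Suc n" for i
  proof -
    have "A' $$ (i,0) = row (transpose_mat H * A) i \<bullet> v"
      unfolding A'_def by (subst index_mult_mat(1)) (use i H A colH in auto)
    also have "\<dots> = ((transpose_mat H * A) *\<^sub>v v) $ i"
      by (subst index_mult_mat_vec) (use i H A in auto)
    also have "\<dots> = (transpose_mat H *\<^sub>v (e \<cdot>\<^sub>v v)) $ i"
      using H A v Av by (simp add: assoc_mult_mat_vec[of _ "Suc n" "Suc n"])
    also have "\<dots> = e * (row (transpose_mat H) i \<bullet> col H 0)"
      using i H v colH by (simp add: mult_mat_vec)
    also have "\<dots> = e * (transpose_mat H * H) $$ (i,0)"
      by (subst index_mult_mat(1)) (use i H in auto)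
    also have "\<dots> = (if i = 0 then e else 0)" unfolding H(2) using i by simp
    finally show ?thesis .
  qed
  have A'0': "A' $$ (0,j) = (if j = 0 then e else 0)" if j: "j < Suc n" for j
    using A'0[OF j] symA' A' j by (metis carrier_matD index_transpose_mat(1) zero_less_Suc)
  define A3 where "A3 = mat n n (\<lambda>(i,j). A' $$ (Suc i, Suc j))"
  have A3: "A3 \<in> carrier_mat n n" unfolding A3_def by simp
  have symA3: "transpose_mat A3 = A3" unfolding A3_def
  proof (rule eq_matI)
    fix i j assume "i < dim_row (mat n n (\<lambda>(i,j). A' $$ (Suc i, Suc j)))"
      "j < dim_col (mat n n (\<lambda>(i,j). A' $$ (Suc i, Suc j)))"
    thus "transpose_mat (mat n n (\<lambda>(i,j). A' $$ (Suc i, Suc j))) $$ (i, j) =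
          mat n n (\<lambda>(i,j). A' $$ (Suc i, Suc j)) $$ (i, j)"
      using symA' A' by (metis (no_types, lifting) Suc_less_eq carrier_matD(1,2) case_prod_conv dim_col_mat(1) dim_row_mat(1) index_mat(1) index_transpose_mat(1))
  qed auto
  obtain Q3 where Q3: "Q3 \<in> carrier_mat n n" "transpose_mat Q3 * Q3 = 1\<^sub>m n"
    "Q3 * transpose_mat Q3 = 1\<^sub>m n" "diagonal_mat (transpose_mat Q3 * A3 * Q3)"
    using Suc.IH[OF A3 symA3] by auto
  define Q' where "Q' = four_block_mat (1\<^sub>m 1) (0\<^sub>m 1 n) (0\<^sub>m n 1) Q3"
  have Q': "Q' \<in> carrier_mat (Suc n) (Suc n)" unfolding Q'_def using Q3 by auto
  have Q't: "transpose_mat Q' = four_block_mat (1\<^sub>m 1) (0\<^sub>m 1 n) (0\<^sub>m n 1) (transpose_mat Q3)"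
    unfolding Q'_def using Q3 by (simp add: transpose_four_block_mat[OF one_carrier_mat zero_carrier_mat zero_carrier_mat Q3(1)])
  have Q3t: "transpose_mat Q3 \<in> carrier_mat n n" using Q3 by simp
  have Q'Q': "transpose_mat Q' * Q' = 1\<^sub>m (Suc n)"
    unfolding Q't unfolding Q'_def using Q3
    by (subst mult_four_block_mat[OF one_carrier_mat zero_carrier_mat zero_carrier_mat Q3t
          one_carrier_mat zero_carrier_mat zero_carrier_mat Q3(1)]) auto
  have Q'Q't: "Q' * transpose_mat Q' = 1\<^sub>m (Suc n)"
    unfolding Q't unfolding Q'_def using Q3
    by (subst mult_four_block_mat[OF one_carrier_mat zero_carrier_mat zero_carrier_mat Q3(1)
          one_carrier_mat zero_carrier_mat zero_carrier_mat Q3t]) auto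
  define E where "E = mat 1 1 (\<lambda>_. e)"
  have A'b: "A' = four_block_mat E (0\<^sub>m 1 n) (0\<^sub>m n 1) A3"
  proof (rule eq_matI)
    fix i j assume ij: "i < dim_row (four_block_mat E (0\<^sub>m 1 n) (0\<^sub>m n 1) A3)"
      "j < dim_col (four_block_mat E (0\<^sub>m 1 n) (0\<^sub>m n 1) A3)"
    hence i: "i < Suc n" and j: "j < Suc n" using A3 unfolding E_def by auto
    show "A' $$ (i, j) = four_block_mat E (0\<^sub>m 1 n) (0\<^sub>m n 1) A3 $$ (i, j)"
    proof (cases "i = 0 \<or> j = 0")
      case True
      thus ?thesis using A'0[OF i] A'0'[OF j] i j A3 unfolding E_def by auto
    next
      case False
      then obtain i' j' where "i = Suc i'" "j = Suc j'" by (metis not0_implies_Suc)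
      thus ?thesis using i j A3 unfolding E_def A3_def by auto
    qed
  qed (use A' A3 E_def in auto)
  have E: "E \<in> carrier_mat 1 1" unfolding E_def by simp
  define Q where "Q = H * Q'"
  have Q: "Q \<in> carrier_mat (Suc n) (Suc n)" unfolding Q_def using H Q' by auto
  have Qt: "transpose_mat Q = transpose_mat Q' * transpose_mat H"
    unfolding Q_def using H Q' by (simp add: transpose_mult)
  have "transpose_mat Q * Q = transpose_mat Q' * (transpose_mat H * H) * Q'"
    unfolding Qt unfolding Q_def using H Q' by (intro assoc4) auto
  hence QQ: "transpose_mat Q * Q = 1\<^sub>m (Suc n)" using H Q' Q'Q' by simp
  have "Q * transpose_mat Q = H * (Q' * transpose_mat Q') * transpose_mat H"
    unfolding Qt unfolding Q_def using H Q' by (intro assoc4) auto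
  hence QQt: "Q * transpose_mat Q = 1\<^sub>m (Suc n)" using H Q' Q'Q't by simp
  have "transpose_mat Q * A * Q = transpose_mat Q' * A' * Q'"
    unfolding Qt unfolding Q_def A'_def using H Q' A by (intro assoc5) auto
  also have "\<dots> = four_block_mat E (0\<^sub>m 1 n) (0\<^sub>m n 1) (transpose_mat Q3 * A3 * Q3)"
  proof -
    have M1: "four_block_mat (1\<^sub>m 1) (0\<^sub>m 1 n) (0\<^sub>m n 1) (transpose_mat Q3) * four_block_mat E (0\<^sub>m 1 n) (0\<^sub>m n 1) A3
       = four_block_mat E (0\<^sub>m 1 n) (0\<^sub>m n 1) (transpose_mat Q3 * A3)"
      by (subst mult_four_block_mat[OF one_carrier_mat zero_carrier_mat zero_carrier_mat Q3t
          E zero_carrier_mat zero_carrier_mat A3]) (use E A3 Q3t in auto)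
    have QA: "transpose_mat Q3 * A3 \<in> carrier_mat n n" using Q3t A3 by simp
    have M2: "four_block_mat E (0\<^sub>m 1 n) (0\<^sub>m n 1) (transpose_mat Q3 * A3) * Q'
       = four_block_mat E (0\<^sub>m 1 n) (0\<^sub>m n 1) (transpose_mat Q3 * A3 * Q3)"
      unfolding Q'_def
      by (subst mult_four_block_mat[OF E zero_carrier_mat zero_carrier_mat QA
          one_carrier_mat zero_carrier_mat zero_carrier_mat Q3(1)]) (use E QA Q3 in auto)
    show ?thesis unfolding Q't A'b M1 M2 ..
  qed
  finally have D: "transpose_mat Q * A * Q = four_block_mat E (0\<^sub>m 1 n) (0\<^sub>m n 1) (transpose_mat Q3 * A3 * Q3)" .
  have "diagonal_mat (transpose_mat Q * A * Q)"
    unfolding D diagonal_mat_def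
  proof (intro allI impI)
    fix i j assume i: "i < dim_row (four_block_mat E (0\<^sub>m 1 n) (0\<^sub>m n 1) (transpose_mat Q3 * A3 * Q3))"
      and j: "j < dim_col (four_block_mat E (0\<^sub>m 1 n) (0\<^sub>m n 1) (transpose_mat Q3 * A3 * Q3))"
      and ij: "i \<noteq> j"
    have i': "i < Suc n" and j': "j < Suc n" using i j Q3 A3 E by auto
    show "four_block_mat E (0\<^sub>m 1 n) (0\<^sub>m n 1) (transpose_mat Q3 * A3 * Q3) $$ (i, j) = 0"
      using Q3(4) i' j' ij Q3(1) A3 E unfolding diagonal_mat_def by auto
  qed
  thus ?case using Q QQ QQt by blast
qed



lemma quad_disc: fixes \<alpha> \<beta> \<gamma> :: real
  assumes "\<forall>t. 0 \<le> \<alpha> + 2 * t * \<beta> + t^2 * \<gamma>" and "\<gamma> \<ge> 0"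
  shows "\<beta>^2 \<le> \<alpha> * \<gamma>"
proof (cases "\<gamma> = 0")
  case True
  have a: "\<alpha> \<ge> 0" using assms(1)[rule_format, of 0] by simp
  have "\<beta> = 0"
  proof (rule ccontr)
    assume b: "\<beta> \<noteq> 0"
    have "0 \<le> \<alpha> + 2 * (- (\<alpha> + 1) / (2 * \<beta>)) * \<beta>" using assms(1)[rule_format, of "- (\<alpha> + 1) / (2 * \<beta>)"] True by simp
    also have "\<dots> = -1" using b by (simp add: field_simps)
    finally show False by simp
  qed
  thus ?thesis using True by simp
next
  case False
  hence g: "\<gamma> > 0" using assms(2) by simp
  have "0 \<le> \<alpha> + 2 * (- \<beta> / \<gamma>) * \<beta> + (- \<beta> / \<gamma>)^2 * \<gamma>" using assms(1) by blast
  also have "\<dots> = \<alpha> - \<beta>^2 / \<gamma>" using g by (simp add: field_simps power2_eq_square)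
  finally show ?thesis using g by (simp add: field_simps)
qed

lemma psd_symm: assumes "pos_semidef N R" "a \<in> carrier_vec N" "b \<in> carrier_vec N"
  shows "b \<bullet> (R *\<^sub>v a) = a \<bullet> (R *\<^sub>v b)"
proof -
  have R: "R \<in> carrier_mat N N" and s: "transpose_mat R = R"
    using assms(1) unfolding pos_semidef_def sym_mat_def by auto
  have "b \<bullet> (R *\<^sub>v a) = (transpose_mat R *\<^sub>v b) \<bullet> a"
    using transpose_vec_mult_scalar[OF R assms(2,3)] by simp
  also have "\<dots> = (R *\<^sub>v b) \<bullet> a" using s by simp
  also have "\<dots> = a \<bullet> (R *\<^sub>v b)" using R assms by (metis comm_scalar_prod mult_mat_vec_carrier)
  finally show ?thesis .
qed

lemma psd_cs: assumes P: "pos_semidef N R" and a: "a \<in> carrier_vec N" and b: "b \<in> carrier_vec N"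
  shows "(a \<bullet> (R *\<^sub>v b))^2 \<le> (a \<bullet> (R *\<^sub>v a)) * (b \<bullet> (R *\<^sub>v b))"
proof (rule quad_disc)
  have R: "R \<in> carrier_mat N N" using P unfolding pos_semidef_def by auto
  show "b \<bullet> (R *\<^sub>v b) \<ge> 0" using P b unfolding pos_semidef_def by auto
  show "\<forall>t. 0 \<le> a \<bullet> (R *\<^sub>v a) + 2 * t * (a \<bullet> (R *\<^sub>v b)) + t^2 * (b \<bullet> (R *\<^sub>v b))"
  proof
    fix t :: real
    have ab: "a + t \<cdot>\<^sub>v b \<in> carrier_vec N" using a b by simp
    have "0 \<le> (a + t \<cdot>\<^sub>v b) \<bullet> (R *\<^sub>v (a + t \<cdot>\<^sub>v b))" using P ab unfolding pos_semidef_def by auto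
    also have "R *\<^sub>v (a + t \<cdot>\<^sub>v b) = R *\<^sub>v a + t \<cdot>\<^sub>v (R *\<^sub>v b)"
      using R a b by (simp add: mult_add_distrib_mat_vec mult_mat_vec)
    also have "(a + t \<cdot>\<^sub>v b) \<bullet> (R *\<^sub>v a + t \<cdot>\<^sub>v (R *\<^sub>v b))
       = a \<bullet> (R *\<^sub>v a) + t * (a \<bullet> (R *\<^sub>v b)) + t * (b \<bullet> (R *\<^sub>v a)) + t * t * (b \<bullet> (R *\<^sub>v b))"
      using R a b by (simp add: add_scalar_prod_distrib[of _ N] scalar_prod_add_distrib[of _ N] algebra_simps)
    also have "b \<bullet> (R *\<^sub>v a) = a \<bullet> (R *\<^sub>v b)" by (rule psd_symm[OF P a b])
    finally show "0 \<le> a \<bullet> (R *\<^sub>v a) + 2 * t * (a \<bullet> (R *\<^sub>v b)) + t^2 * (b \<bullet> (R *\<^sub>v b))"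
      by (simp add: power2_eq_square algebra_simps)
  qed
qed

lemma vec_self_zero: fixes w :: "real vec"
  assumes "w \<in> carrier_vec n" "w \<bullet> w = 0" shows "w = 0\<^sub>v n"
  using vec_pos_self[OF assms(1)] assms(2) by force

lemma psd_ker: assumes P: "pos_semidef N R" and v: "v \<in> carrier_vec N" and z: "v \<bullet> (R *\<^sub>v v) = 0"
  shows "R *\<^sub>v v = 0\<^sub>v N"
proof -
  have R: "R \<in> carrier_mat N N" using P unfolding pos_semidef_def by auto
  have Rv: "R *\<^sub>v v \<in> carrier_vec N" using R v by simp
  have "((R *\<^sub>v v) \<bullet> (R *\<^sub>v v))^2 \<le> ((R *\<^sub>v v) \<bullet> (R *\<^sub>v (R *\<^sub>v v))) * (v \<bullet> (R *\<^sub>v v))"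
    by (rule psd_cs[OF P Rv v])
  hence "((R *\<^sub>v v) \<bullet> (R *\<^sub>v v))^2 = 0" using z by simp
  hence "(R *\<^sub>v v) \<bullet> (R *\<^sub>v v) = 0" by simp
  thus ?thesis using vec_self_zero Rv by blast
qed



lemma orth_conj_back:
  fixes Q B :: "real mat"
  assumes Q: "Q \<in> carrier_mat N N" and QQt: "Q * transpose_mat Q = 1\<^sub>m N" and B: "B \<in> carrier_mat N N"
  shows "Q * (transpose_mat Q * B * Q) * transpose_mat Q = B"
proof -
  have Qt: "transpose_mat Q \<in> carrier_mat N N" using Q by simp
  have M: "transpose_mat Q * B \<in> carrier_mat N N" using Qt B by simp
  have "Q * (transpose_mat Q * B) = (Q * transpose_mat Q) * B"
    using assoc_mult_mat[OF Q Qt B] by (rule sym)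
  also have "\<dots> = B" unfolding QQt using B by simp
  finally have e1: "Q * (transpose_mat Q * B) = B" .
  have "Q * (transpose_mat Q * B * Q) = (Q * (transpose_mat Q * B)) * Q"
    using assoc_mult_mat[OF Q M Q] by (rule sym)
  also have "\<dots> = B * Q" unfolding e1 ..
  finally have e2: "Q * (transpose_mat Q * B * Q) = B * Q" .
  have "B * Q * transpose_mat Q = B * (Q * transpose_mat Q)" by (rule assoc_mult_mat[OF B Q Qt])
  also have "\<dots> = B" unfolding QQt using B by simp
  finally show ?thesis unfolding e2 .
qed

lemma diag_entry_quad:
  fixes Q S :: "real mat"
  assumes Q: "Q \<in> carrier_mat N N" and S: "S \<in> carrier_mat N N" and i: "i < N"
  shows "(transpose_mat Q * S * Q) $$ (i,i) = col Q i \<bullet> (S *\<^sub>v col Q i)"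
proof -
  have "transpose_mat Q * S * Q = transpose_mat Q * (S * Q)" by (rule assoc_mult_mat) (use Q S in auto)
  hence "(transpose_mat Q * S * Q) $$ (i,i) = row (transpose_mat Q) i \<bullet> col (S * Q) i"
    using Q S i by simp
  also have "\<dots> = col Q i \<bullet> (S *\<^sub>v col Q i)" using Q S i by (simp add: mult_mat_vec_def)
  finally show ?thesis .
qed

lemma psd_sqrt_exists:
  assumes S: "pos_semidef N S"
  shows "\<exists>R. pos_semidef N R \<and> R * R = S"
proof -
  have Sc: "S \<in> carrier_mat N N" and Ss: "transpose_mat S = S"
    using S unfolding pos_semidef_def sym_mat_def by auto
  obtain Q where Q: "Q \<in> carrier_mat N N" "transpose_mat Q * Q = 1\<^sub>m N" "Q * transpose_mat Q = 1\<^sub>m N"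
    "diagonal_mat (transpose_mat Q * S * Q)"
    using spectral[OF Sc Ss] by auto
  have Qt: "transpose_mat Q \<in> carrier_mat N N" using Q by simp
  define L where "L = transpose_mat Q * S * Q"
  have L: "L \<in> carrier_mat N N" unfolding L_def using Q Sc by simp
  have Lnn: "L $$ (i,i) \<ge> 0" if i: "i < N" for i
    unfolding L_def diag_entry_quad[OF Q(1) Sc i] using S Q(1) i unfolding pos_semidef_def by simp
  have Ldiag: "L = mat N N (\<lambda>(i,j). if i = j then L $$ (i,i) else 0)"
  proof (rule eq_matI)
    fix i j assume "i < dim_row (mat N N (\<lambda>(i,j). if i = j then L $$ (i,i) else 0))"
      "j < dim_col (mat N N (\<lambda>(i,j). if i = j then L $$ (i,i) else 0))"
    hence i: "i < N" and j: "j < N" by auto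
    have "i \<noteq> j \<Longrightarrow> L $$ (i,j) = 0" using Q(4) L i j unfolding L_def diagonal_mat_def by auto
    thus "L $$ (i, j) = mat N N (\<lambda>(i,j). if i = j then L $$ (i,i) else 0) $$ (i, j)"
      using i j by auto
  qed (use L in auto)
  define Dm where "Dm = mat N N (\<lambda>(i,j). if i = j then sqrt (L $$ (i,i)) else 0)"
  have Dm: "Dm \<in> carrier_mat N N" unfolding Dm_def by simp
  have DmDm: "Dm * Dm = L"
  proof (rule eq_matI)
    fix i j assume "i < dim_row L" "j < dim_col L"
    hence i: "i < N" and j: "j < N" using L by auto
    have "(Dm * Dm) $$ (i,j) = (\<Sum>k<N. (if i = k then sqrt (L $$ (i,i)) else 0) * (if k = j then sqrt (L $$ (k,k)) else 0))"
      using i j unfolding Dm_def by (simp add: scalar_prod_def atLeast0LessThan row_def col_def)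
    also have "\<dots> = (\<Sum>k<N. if k = i then (if i = j then sqrt (L $$ (i,i)) * sqrt (L $$ (i,i)) else 0) else 0)"
      by (rule sum.cong) auto
    also have "\<dots> = (if i = j then L $$ (i,i) else 0)" using i Lnn[OF i] by auto
    also have "\<dots> = L $$ (i,j)" using i j by (subst Ldiag) simp
    finally show "(Dm * Dm) $$ (i,j) = L $$ (i,j)" .
  qed (use L Dm in auto)
  have Dmt: "transpose_mat Dm = Dm" unfolding Dm_def by (intro eq_matI) auto
  define R where "R = Q * Dm * transpose_mat Q"
  have R: "R \<in> carrier_mat N N" unfolding R_def using Q Dm by simp
  have RR: "R * R = S"
  proof -
    have QD: "Q * Dm \<in> carrier_mat N N" using Q Dm by simp
    have "R * R = (Q * Dm) * (transpose_mat Q * (Q * Dm)) * transpose_mat Q"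
      unfolding R_def by (rule assoc4[OF QD Qt QD Qt])
    also have "transpose_mat Q * (Q * Dm) = Dm"
    proof -
      have "transpose_mat Q * (Q * Dm) = (transpose_mat Q * Q) * Dm"
        using assoc_mult_mat[OF Qt Q(1) Dm] by (rule sym)
      also have "\<dots> = Dm" unfolding Q(2) using Dm by simp
      finally show ?thesis .
    qed
    also have "Q * Dm * Dm = Q * (Dm * Dm)" by (rule assoc_mult_mat[OF Q(1) Dm Dm])
    also have "Q * (Dm * Dm) * transpose_mat Q = S" unfolding DmDm L_def by (rule orth_conj_back[OF Q(1) Q(3) Sc])
    finally show ?thesis .
  qed
  have Rs: "transpose_mat R = R"
  proof -
    have "transpose_mat R = transpose_mat (transpose_mat Q) * transpose_mat (Q * Dm)"
      unfolding R_def by (rule transpose_mult) (use Q Dm in auto)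
    also have "transpose_mat (Q * Dm) = Dm * transpose_mat Q"
      using transpose_mult[OF Q(1) Dm] Dmt by simp
    also have "transpose_mat (transpose_mat Q) * (Dm * transpose_mat Q) = Q * Dm * transpose_mat Q"
      using assoc_mult_mat[OF Q(1) Dm Qt] by (simp only: transpose_transpose)
    finally show ?thesis unfolding R_def .
  qed
  have Rpsd: "v \<bullet> (R *\<^sub>v v) \<ge> 0" if v: "v \<in> carrier_vec N" for v
  proof -
    define y where "y = transpose_mat Q *\<^sub>v v"
    have y: "y \<in> carrier_vec N" unfolding y_def using Q v by simp
    have QD: "Q * Dm \<in> carrier_mat N N" using Q Dm by simp
    have "R *\<^sub>v v = (Q * Dm) *\<^sub>v y" unfolding R_def y_def by (rule assoc_mult_mat_vec[OF QD Qt v])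
    also have "\<dots> = Q *\<^sub>v (Dm *\<^sub>v y)" by (rule assoc_mult_mat_vec[OF Q(1) Dm y])
    finally have "R *\<^sub>v v = Q *\<^sub>v (Dm *\<^sub>v y)" .
    hence "v \<bullet> (R *\<^sub>v v) = y \<bullet> (Dm *\<^sub>v y)"
      using transpose_vec_mult_scalar[OF Q(1), of "Dm *\<^sub>v y" v] Dm y v unfolding y_def by simp
    also have "\<dots> = (\<Sum>i<N. y $ i * (sqrt (L $$ (i,i)) * y $ i))"
    proof -
      have Dmy: "(Dm *\<^sub>v y) $ i = sqrt (L $$ (i,i)) * y $ i" if i: "i < N" for i
      proof -
        have "(Dm *\<^sub>v y) $ i = (\<Sum>k\<in>{0..<N}. (if i = k then sqrt (L $$ (i,i)) else 0) * y $ k)"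
          using i y unfolding Dm_def by (simp add: scalar_prod_def row_def)
        also have "\<dots> = (\<Sum>k\<in>{0..<N}. if k = i then sqrt (L $$ (i,i)) * y $ i else 0)"
          by (rule sum.cong) auto
        also have "\<dots> = sqrt (L $$ (i,i)) * y $ i" using i by simp
        finally show ?thesis .
      qed
      have dv: "dim_vec (Dm *\<^sub>v y) = N" using Dm by simp
      show ?thesis unfolding scalar_prod_def dv atLeast0LessThan
        by (rule sum.cong[OF refl]) (metis Dmy lessThan_iff)
    qed
    also have "\<dots> \<ge> 0"
    proof (intro sum_nonneg)
      fix x assume "x \<in> {..<N}"
      hence s: "0 \<le> sqrt (L $$ (x,x))" using Lnn by simp
      have "y $ x * (sqrt (L $$ (x,x)) * y $ x) = sqrt (L $$ (x,x)) * (y $ x * y $ x)"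
        by (simp add: algebra_simps)
      also have "\<dots> \<ge> 0" using s by (simp add: mult_nonneg_nonneg)
      finally show "y $ x * (sqrt (L $$ (x,x)) * y $ x) \<ge> 0" .
    qed
    finally show ?thesis .
  qed
  show ?thesis using R RR Rs Rpsd unfolding pos_semidef_def sym_mat_def by blast
qed



lemma sym_swap: fixes R :: "real mat"
  assumes R: "R \<in> carrier_mat N N" and s: "transpose_mat R = R"
    and a: "a \<in> carrier_vec N" and b: "b \<in> carrier_vec N"
  shows "b \<bullet> (R *\<^sub>v a) = a \<bullet> (R *\<^sub>v b)"
proof -
  have "b \<bullet> (R *\<^sub>v a) = (transpose_mat R *\<^sub>v b) \<bullet> a"
    using transpose_vec_mult_scalar[OF R a b] by simp
  also have "\<dots> = (R *\<^sub>v b) \<bullet> a" using s by simp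
  also have "\<dots> = a \<bullet> (R *\<^sub>v b)" using R a b by (metis comm_scalar_prod mult_mat_vec_carrier)
  finally show ?thesis .
qed

lemma orth_col_eigen:
  fixes Q B :: "real mat"
  assumes Q: "Q \<in> carrier_mat N N" and QtQ: "transpose_mat Q * Q = 1\<^sub>m N"
    and QQt: "Q * transpose_mat Q = 1\<^sub>m N" and B: "B \<in> carrier_mat N N"
    and D: "diagonal_mat (transpose_mat Q * B * Q)" and i: "i < N"
  shows "B *\<^sub>v col Q i = (transpose_mat Q * B * Q) $$ (i,i) \<cdot>\<^sub>v col Q i"
    and "col Q i \<bullet> col Q i = 1"
proof -
  define L where "L = transpose_mat Q * B * Q"
  define \<mu> where "\<mu> = L $$ (i,i)"
  have Qt: "transpose_mat Q \<in> carrier_mat N N" using Q by simp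
  have L: "L \<in> carrier_mat N N" unfolding L_def using Q B by simp
  have v: "col Q i \<in> carrier_vec N" using Q col_dim[of Q i] by simp
  have BL: "B = Q * L * transpose_mat Q" unfolding L_def using orth_conj_back[OF Q QQt B] by simp
  have QL: "Q * L \<in> carrier_mat N N" using Q L by simp
  have QtQi: "(transpose_mat Q * Q) $$ (j,i) = row (transpose_mat Q) j \<bullet> col Q i" if "j < N" for j
    using that Q i by (subst index_mult_mat(1)) auto
  have u: "transpose_mat Q *\<^sub>v col Q i = unit_vec N i"
  proof (rule eq_vecI)
    fix j assume "j < dim_vec (unit_vec N i)"
    hence j: "j < N" by simp
    have "(transpose_mat Q *\<^sub>v col Q i) $ j = row (transpose_mat Q) j \<bullet> col Q i" using j Q by simp
    also have "\<dots> = (transpose_mat Q * Q) $$ (j,i)" using QtQi[OF j] by simp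
    also have "\<dots> = unit_vec N i $ j" unfolding QtQ using i j by (simp add: unit_vec_def)
    finally show "(transpose_mat Q *\<^sub>v col Q i) $ j = unit_vec N i $ j" .
  qed (use Q in simp)
  have Lu: "L *\<^sub>v unit_vec N i = \<mu> \<cdot>\<^sub>v unit_vec N i"
  proof (rule eq_vecI)
    fix j assume "j < dim_vec (\<mu> \<cdot>\<^sub>v unit_vec N i)"
    hence j: "j < N" by simp
    have "(L *\<^sub>v unit_vec N i) $ j = L $$ (j,i)" using j L i by simp
    also have "\<dots> = (\<mu> \<cdot>\<^sub>v unit_vec N i) $ j"
      using D j i L unfolding L_def[symmetric] diagonal_mat_def \<mu>_def by (auto simp: unit_vec_def)
    finally show "(L *\<^sub>v unit_vec N i) $ j = (\<mu> \<cdot>\<^sub>v unit_vec N i) $ j" .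
  qed (use L in simp)
  have Qu: "Q *\<^sub>v unit_vec N i = col Q i"
    by (rule eq_vecI) (use Q i in auto)
  have "B *\<^sub>v col Q i = (Q * L) *\<^sub>v (transpose_mat Q *\<^sub>v col Q i)"
    unfolding BL by (rule assoc_mult_mat_vec[OF QL Qt v])
  also have "\<dots> = Q *\<^sub>v (L *\<^sub>v unit_vec N i)" unfolding u by (rule assoc_mult_mat_vec[OF Q L]) simp
  also have "\<dots> = \<mu> \<cdot>\<^sub>v col Q i" unfolding Lu using Q by (simp add: mult_mat_vec Qu)
  finally show "B *\<^sub>v col Q i = (transpose_mat Q * B * Q) $$ (i,i) \<cdot>\<^sub>v col Q i"
    unfolding \<mu>_def L_def .
  have "col Q i \<bullet> col Q i = (transpose_mat Q * Q) $$ (i,i)" using QtQi[OF i] Q i by simp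
  also have "\<dots> = 1" unfolding QtQ using i by simp
  finally show "col Q i \<bullet> col Q i = 1" .
qed

lemma psd_sqrt_unique:
  assumes R: "pos_semidef N R" and S: "pos_semidef N S" and RS: "R * R = S * S"
  shows "R = S"
proof -
  have Rc: "R \<in> carrier_mat N N" and Rs: "transpose_mat R = R"
    using R unfolding pos_semidef_def sym_mat_def by auto
  have Sc: "S \<in> carrier_mat N N" and Ss: "transpose_mat S = S"
    using S unfolding pos_semidef_def sym_mat_def by auto
  define B where "B = R - S"
  have Bc: "B \<in> carrier_mat N N" unfolding B_def using Rc Sc by (simp add: minus_carrier_mat)
  have Bs: "transpose_mat B = B" unfolding B_def using transpose_minus[OF Rc Sc] Rs Ss by simp
  obtain Q where Q: "Q \<in> carrier_mat N N" "transpose_mat Q * Q = 1\<^sub>m N" "Q * transpose_mat Q = 1\<^sub>m N"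
    "diagonal_mat (transpose_mat Q * B * Q)"
    using spectral[OF Bc Bs] by auto
  define L where "L = transpose_mat Q * B * Q"
  have L: "L \<in> carrier_mat N N" unfolding L_def using Q Bc by simp
  have Lii: "L $$ (i,i) = 0" if i: "i < N" for i
  proof (rule ccontr)
    define v where "v = col Q i"
    define \<mu> where "\<mu> = L $$ (i,i)"
    assume "L $$ (i,i) \<noteq> 0"
    hence mu: "\<mu> \<noteq> 0" unfolding \<mu>_def .
    have v: "v \<in> carrier_vec N" unfolding v_def using Q col_dim[of Q i] by simp
    have Bv: "B *\<^sub>v v = \<mu> \<cdot>\<^sub>v v" and vv: "v \<bullet> v = 1"
      using orth_col_eigen[OF Q(1,2,3) Bc Q(4) i] unfolding v_def \<mu>_def L_def by auto
    have Rv: "R *\<^sub>v v \<in> carrier_vec N" and Sv: "S *\<^sub>v v \<in> carrier_vec N" using Rc Sc v by auto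
    have Bx: "B *\<^sub>v x = R *\<^sub>v x - S *\<^sub>v x" if "x \<in> carrier_vec N" for x
      unfolding B_def by (rule minus_mult_distrib_mat_vec[OF Rc Sc that])
    have e1: "v \<bullet> (R *\<^sub>v (B *\<^sub>v v)) = \<mu> * (v \<bullet> (R *\<^sub>v v))"
      unfolding Bv using Rc v by (simp add: mult_mat_vec)
    have e2: "v \<bullet> (B *\<^sub>v (S *\<^sub>v v)) = \<mu> * (v \<bullet> (S *\<^sub>v v))"
    proof -
      have "v \<bullet> (B *\<^sub>v (S *\<^sub>v v)) = (S *\<^sub>v v) \<bullet> (B *\<^sub>v v)" by (rule sym_swap[OF Bc Bs Sv v])
      also have "\<dots> = \<mu> * ((S *\<^sub>v v) \<bullet> v)" unfolding Bv using Sv v by simp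
      also have "(S *\<^sub>v v) \<bullet> v = v \<bullet> (S *\<^sub>v v)" using Sv v by (rule comm_scalar_prod)
      finally show ?thesis .
    qed
    have RRv: "R *\<^sub>v (R *\<^sub>v v) = S *\<^sub>v (S *\<^sub>v v)"
      using assoc_mult_mat_vec[OF Rc Rc v] assoc_mult_mat_vec[OF Sc Sc v] RS by simp
    have "v \<bullet> (R *\<^sub>v (B *\<^sub>v v)) + v \<bullet> (B *\<^sub>v (S *\<^sub>v v))
        = v \<bullet> (R *\<^sub>v (R *\<^sub>v v)) - v \<bullet> (R *\<^sub>v (S *\<^sub>v v)) + (v \<bullet> (R *\<^sub>v (S *\<^sub>v v)) - v \<bullet> (S *\<^sub>v (S *\<^sub>v v)))"
      unfolding Bx[OF v] Bx[OF Sv]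
      using Rc Sc v Rv Sv
      by (simp add: mult_minus_distrib_mat_vec[OF Rc Rv Sv] scalar_prod_minus_distrib[of _ N])
    also have "\<dots> = 0" unfolding RRv by simp
    finally have "\<mu> * (v \<bullet> (R *\<^sub>v v) + v \<bullet> (S *\<^sub>v v)) = 0" unfolding e1 e2 by (simp add: algebra_simps)
    hence sum0: "v \<bullet> (R *\<^sub>v v) + v \<bullet> (S *\<^sub>v v) = 0" using mu by simp
    have a: "v \<bullet> (R *\<^sub>v v) \<ge> 0" and b: "v \<bullet> (S *\<^sub>v v) \<ge> 0"
      using R S v unfolding pos_semidef_def by auto
    have "R *\<^sub>v v = 0\<^sub>v N" by (rule psd_ker[OF R v]) (use sum0 a b in linarith)
    moreover have "S *\<^sub>v v = 0\<^sub>v N" by (rule psd_ker[OF S v]) (use sum0 a b in linarith)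
    ultimately have "B *\<^sub>v v = 0\<^sub>v N" unfolding Bx[OF v] by simp
    hence "\<mu> \<cdot>\<^sub>v v = 0\<^sub>v N" unfolding Bv .
    hence "(\<mu> \<cdot>\<^sub>v v) \<bullet> v = 0" using v by simp
    hence "\<mu> * (v \<bullet> v) = 0" using v by simp
    thus False using vv mu by simp
  qed
  have L0: "L = 0\<^sub>m N N"
  proof (rule eq_matI)
    fix i j assume "i < dim_row (0\<^sub>m N N :: real mat)" "j < dim_col (0\<^sub>m N N :: real mat)"
    hence i: "i < N" and j: "j < N" by auto
    show "L $$ (i,j) = 0\<^sub>m N N $$ (i,j)"
    proof (cases "i = j")
      case True thus ?thesis using Lii[OF i] i by simp
    next
      case False thus ?thesis using Q(4) i j L unfolding L_def[symmetric] diagonal_mat_def by auto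
    qed
  qed (use L in auto)
  have "B = Q * L * transpose_mat Q" unfolding L_def using orth_conj_back[OF Q(1) Q(3) Bc] by simp
  also have "\<dots> = 0\<^sub>m N N" unfolding L0 using Q(1) by simp
  finally have B0: "B = 0\<^sub>m N N" .
  show "R = S"
  proof (rule eq_matI)
    fix i j assume "i < dim_row S" "j < dim_col S"
    hence i: "i < N" and j: "j < N" using Sc by auto
    have "B $$ (i,j) = 0" unfolding B0 using i j by simp
    thus "R $$ (i,j) = S $$ (i,j)" unfolding B_def using i j Sc by simp
  qed (use Rc Sc in auto)
qed

lemma psd_sqrt_prop:
  assumes S: "pos_semidef N S"
  shows "pos_semidef N (psd_sqrt N S) \<and> psd_sqrt N S * psd_sqrt N S = S"
proof -
  have "\<exists>!R. pos_semidef N R \<and> R * R = S"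
    using psd_sqrt_exists[OF S] psd_sqrt_unique by metis
  thus ?thesis unfolding psd_sqrt_def by (rule theI')
qed



lemma inv_exists:
  fixes M :: "real mat"
  assumes M: "M \<in> carrier_mat N N" and ker: "\<And>v. v \<in> carrier_vec N \<Longrightarrow> M *\<^sub>v v = 0\<^sub>v N \<Longrightarrow> v = 0\<^sub>v N"
  shows "\<exists>B \<in> carrier_mat N N. M * B = 1\<^sub>m N \<and> B * M = 1\<^sub>m N"
proof -
  have "det M \<noteq> 0" using det_0_iff_vec_prod_zero_field[OF M] ker by auto
  from det_non_zero_imp_unit[OF M this, unfolded Units_def, of "()"]
  obtain B where B: "B \<in> carrier_mat N N" and BA: "B * M = 1\<^sub>m N" and AB: "M * B = 1\<^sub>m N"
    by (auto simp: ring_mat_def)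
  thus ?thesis by blast
qed

lemma inv_unique:
  fixes M :: "real mat"
  assumes M: "M \<in> carrier_mat N N" and B1: "B1 \<in> carrier_mat N N" "M * B1 = 1\<^sub>m N" "B1 * M = 1\<^sub>m N"
    and B2: "B2 \<in> carrier_mat N N" "M * B2 = 1\<^sub>m N" "B2 * M = 1\<^sub>m N"
  shows "B1 = B2"
proof -
  have "B1 = B1 * (M * B2)" unfolding B2(2) using B1 by simp
  also have "\<dots> = (B1 * M) * B2" using assoc_mult_mat[OF B1(1) M B2(1)] by simp
  also have "\<dots> = B2" unfolding B1(3) using B2 by simp
  finally show ?thesis .
qed

lemma mat_inv_prop:
  fixes M :: "real mat"
  assumes M: "M \<in> carrier_mat N N" and ker: "\<And>v. v \<in> carrier_vec N \<Longrightarrow> M *\<^sub>v v = 0\<^sub>v N \<Longrightarrow> v = 0\<^sub>v N"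
  shows "mat_inv N M \<in> carrier_mat N N \<and> M * mat_inv N M = 1\<^sub>m N \<and> mat_inv N M * M = 1\<^sub>m N"
proof -
  have "\<exists>!B. B \<in> carrier_mat N N \<and> M * B = 1\<^sub>m N \<and> B * M = 1\<^sub>m N"
    using inv_exists[OF M ker] inv_unique[OF M] by blast
  thus ?thesis unfolding mat_inv_def by (rule theI')
qed

lemma inv_sym:
  fixes M B :: "real mat"
  assumes M: "M \<in> carrier_mat N N" and Ms: "transpose_mat M = M"
    and B: "B \<in> carrier_mat N N" "M * B = 1\<^sub>m N" "B * M = 1\<^sub>m N"
  shows "transpose_mat B = B"
proof -
  have Bt: "transpose_mat B \<in> carrier_mat N N" using B by simp
  have "transpose_mat B * M = transpose_mat (M * B)"
    using transpose_mult[OF M B(1)] Ms by simp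
  hence e: "transpose_mat B * M = 1\<^sub>m N" unfolding B(2) by simp
  have "transpose_mat B = transpose_mat B * (M * B)" unfolding B(2) using Bt by simp
  also have "\<dots> = (transpose_mat B * M) * B" using assoc_mult_mat[OF Bt M B(1)] by simp
  also have "\<dots> = B" unfolding e using B by simp
  finally show ?thesis .
qed

lemma pd_ker:
  assumes P: "pos_def N P" and v: "v \<in> carrier_vec N" and z: "P *\<^sub>v v = 0\<^sub>v N"
  shows "v = 0\<^sub>v N"
proof (rule ccontr)
  assume "v \<noteq> 0\<^sub>v N"
  hence "v \<bullet> (P *\<^sub>v v) > 0" using P v unfolding pos_def_def by auto
  thus False using z v by simp
qed

lemma pd_psd: "pos_def N P \<Longrightarrow> pos_semidef N P"
  unfolding pos_def_def pos_semidef_def by (auto simp: less_imp_le)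



lemma mat_vec_zero: fixes A :: "real mat"
  assumes "A \<in> carrier_mat nr nc" shows "A *\<^sub>v 0\<^sub>v nc = 0\<^sub>v nr"
  using assms by (intro eq_vecI) (auto simp: scalar_prod_def)

lemma sel_carrier: "I_sel m N \<in> carrier_mat m N" unfolding I_sel_def by simp

lemma sel_mult: assumes z: "z \<in> carrier_vec N" and mN: "m \<le> N"
  shows "I_sel m N *\<^sub>v z = vec m (\<lambda>a. z $ a)"
proof (rule eq_vecI)
  fix a assume "a < dim_vec (vec m (\<lambda>a. z $ a))"
  hence a: "a < m" by simp
  have "(I_sel m N *\<^sub>v z) $ a = (\<Sum>j\<in>{0..<N}. (if a = j then 1 else 0) * z $ j)"
    using a z unfolding I_sel_def by (simp add: scalar_prod_def row_def)
  also have "\<dots> = (\<Sum>j\<in>{0..<N}. if j = a then z $ a else 0)" by (rule sum.cong) auto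
  also have "\<dots> = z $ a" using a mN by simp
  finally show "(I_sel m N *\<^sub>v z) $ a = vec m (\<lambda>a. z $ a) $ a" using a by simp
qed (simp add: I_sel_def)

lemma selt_mult: assumes w: "w \<in> carrier_vec m" and mN: "m \<le> N" and j: "j < m"
  shows "(transpose_mat (I_sel m N) *\<^sub>v w) $ j = w $ j"
proof -
  have jN: "j < N" using j mN by simp
  have "(transpose_mat (I_sel m N) *\<^sub>v w) $ j = (\<Sum>i\<in>{0..<m}. (if i = j then 1 else 0) * w $ i)"
    using jN w unfolding I_sel_def by (simp add: scalar_prod_def row_def col_def)
  also have "\<dots> = (\<Sum>i\<in>{0..<m}. if i = j then w $ j else 0)" by (rule sum.cong) auto
  also have "\<dots> = w $ j" using j by simp
  finally show ?thesis .
qed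

lemma self_nonneg: fixes y :: "real vec" shows "y \<bullet> y \<ge> 0"
  unfolding scalar_prod_def by (intro sum_nonneg) simp

lemma ellip_mem:
  fixes P :: "real mat" and z :: "real vec" and \<rho> :: real
  assumes P: "pos_def N P" and mN: "m \<le> N" and z: "z \<in> carrier_vec N"
    and zP: "z \<bullet> (P *\<^sub>v z) \<le> \<rho>^2" and \<rho>: "\<rho> \<ge> 0"
  shows "vec m (\<lambda>a. z $ a) \<in> ellipsoid m (0\<^sub>v m) (I_sel m N * mat_inv N P * transpose_mat (I_sel m N)) \<rho>"
proof -
  have Pc: "P \<in> carrier_mat N N" and Ps: "transpose_mat P = P"
    using P unfolding pos_def_def sym_mat_def by auto
  have Ppsd: "pos_semidef N P" using pd_psd[OF P] .
  define Pi where "Pi = mat_inv N P"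
  have Pi: "Pi \<in> carrier_mat N N" "P * Pi = 1\<^sub>m N" "Pi * P = 1\<^sub>m N"
    using mat_inv_prop[OF Pc pd_ker[OF P]] unfolding Pi_def by auto
  have Pis: "transpose_mat Pi = Pi" by (rule inv_sym[OF Pc Ps Pi])
  define Sel where "Sel = I_sel m N"
  have Sel: "Sel \<in> carrier_mat m N" unfolding Sel_def by (rule sel_carrier)
  have Selt: "transpose_mat Sel \<in> carrier_mat N m" using Sel by simp
  define \<Sigma> where "\<Sigma> = Sel * Pi * transpose_mat Sel"
  have \<Sigma>: "\<Sigma> \<in> carrier_mat m m" unfolding \<Sigma>_def using Sel Pi by simp
  have SelPi: "Sel * Pi \<in> carrier_mat m N" using Sel Pi by simp
  have \<Sigma>v: "\<Sigma> *\<^sub>v w = Sel *\<^sub>v (Pi *\<^sub>v (transpose_mat Sel *\<^sub>v w))" if w: "w \<in> carrier_vec m" for w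
  proof -
    have "\<Sigma> *\<^sub>v w = (Sel * Pi) *\<^sub>v (transpose_mat Sel *\<^sub>v w)"
      unfolding \<Sigma>_def by (rule assoc_mult_mat_vec[OF SelPi Selt w])
    also have "\<dots> = Sel *\<^sub>v (Pi *\<^sub>v (transpose_mat Sel *\<^sub>v w))"
      by (rule assoc_mult_mat_vec[OF Sel Pi(1)]) (use Selt w in simp)
    finally show ?thesis .
  qed
  have \<Sigma>q: "w \<bullet> (\<Sigma> *\<^sub>v w) = (transpose_mat Sel *\<^sub>v w) \<bullet> (Pi *\<^sub>v (transpose_mat Sel *\<^sub>v w))"
    if w: "w \<in> carrier_vec m" for w
    unfolding \<Sigma>v[OF w]
    by (rule transpose_vec_mult_scalar[OF Sel _ w, symmetric]) (use Pi Selt w in simp)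
  have Piq: "a \<bullet> (Pi *\<^sub>v a) > 0" if a: "a \<in> carrier_vec N" "a \<noteq> 0\<^sub>v N" for a
  proof -
    define b where "b = Pi *\<^sub>v a"
    have b: "b \<in> carrier_vec N" unfolding b_def using Pi a by simp
    have Pb: "P *\<^sub>v b = a" unfolding b_def using assoc_mult_mat_vec[OF Pc Pi(1) a(1)] Pi(2) a by simp
    have "b \<noteq> 0\<^sub>v N" using Pb a Pc by auto
    hence "b \<bullet> (P *\<^sub>v b) > 0" using P b unfolding pos_def_def by auto
    also have "b \<bullet> (P *\<^sub>v b) = a \<bullet> b" unfolding Pb by (rule comm_scalar_prod[OF b a(1)])
    finally show ?thesis unfolding b_def .
  qed
  have \<Sigma>s: "transpose_mat \<Sigma> = \<Sigma>"
  proof -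
    have "transpose_mat \<Sigma> = transpose_mat (transpose_mat Sel) * transpose_mat (Sel * Pi)"
      unfolding \<Sigma>_def by (rule transpose_mult[OF SelPi Selt])
    also have "transpose_mat (Sel * Pi) = Pi * transpose_mat Sel"
      using transpose_mult[OF Sel Pi(1)] Pis by simp
    also have "transpose_mat (transpose_mat Sel) * (Pi * transpose_mat Sel) = \<Sigma>"
      unfolding \<Sigma>_def using assoc_mult_mat[OF Sel Pi(1) Selt] by simp
    finally show ?thesis .
  qed
  have \<Sigma>pd: "pos_def m \<Sigma>"
    unfolding pos_def_def sym_mat_def
  proof (intro conjI ballI impI)
    fix w :: "real vec" assume w: "w \<in> carrier_vec m" and w0: "w \<noteq> 0\<^sub>v m"
    have a: "transpose_mat Sel *\<^sub>v w \<in> carrier_vec N" using Selt w by simp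
    have "transpose_mat Sel *\<^sub>v w \<noteq> 0\<^sub>v N"
    proof
      assume h: "transpose_mat Sel *\<^sub>v w = 0\<^sub>v N"
      have "w = 0\<^sub>v m"
      proof (rule eq_vecI)
        fix j assume "j < dim_vec (0\<^sub>v m :: real vec)"
        hence j: "j < m" by simp
        have "w $ j = (transpose_mat Sel *\<^sub>v w) $ j" using selt_mult[OF w mN j] unfolding Sel_def by simp
        also have "\<dots> = 0" unfolding h using j mN by simp
        finally show "w $ j = 0\<^sub>v m $ j" using j by simp
      qed (use w in simp)
      thus False using w0 by simp
    qed
    thus "w \<bullet> (\<Sigma> *\<^sub>v w) > 0" unfolding \<Sigma>q[OF w] using Piq a by simp
  qed (use \<Sigma> \<Sigma>s in auto)
  define R where "R = psd_sqrt m \<Sigma>"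
  have Rp: "pos_semidef m R" and RR: "R * R = \<Sigma>"
    using psd_sqrt_prop[OF pd_psd[OF \<Sigma>pd]] unfolding R_def by auto
  have Rc: "R \<in> carrier_mat m m" and Rs: "transpose_mat R = R"
    using Rp unfolding pos_semidef_def sym_mat_def by auto
  have Rker: "v = 0\<^sub>v m" if v: "v \<in> carrier_vec m" and Rv: "R *\<^sub>v v = 0\<^sub>v m" for v
  proof -
    have "\<Sigma> *\<^sub>v v = R *\<^sub>v (R *\<^sub>v v)" unfolding RR[symmetric] by (rule assoc_mult_mat_vec[OF Rc Rc v])
    also have "\<dots> = 0\<^sub>v m" unfolding Rv using Rc by (rule mat_vec_zero)
    finally show ?thesis by (rule pd_ker[OF \<Sigma>pd v])
  qed
  obtain Ri where Ri: "Ri \<in> carrier_mat m m" "R * Ri = 1\<^sub>m m" "Ri * R = 1\<^sub>m m"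
    using inv_exists[OF Rc Rker] by auto
  have Ris: "transpose_mat Ri = Ri" by (rule inv_sym[OF Rc Rs Ri])
  define x where "x = vec m (\<lambda>a. z $ a)"
  have x: "x \<in> carrier_vec m" unfolding x_def by simp
  have xS: "x = Sel *\<^sub>v z" unfolding x_def Sel_def by (rule sel_mult[OF z mN, symmetric])
  define y where "y = Ri *\<^sub>v x"
  define w where "w = Ri *\<^sub>v y"
  have y: "y \<in> carrier_vec m" unfolding y_def using Ri x by simp
  have w: "w \<in> carrier_vec m" unfolding w_def using Ri y by simp
  have wx: "w \<bullet> x = y \<bullet> y"
  proof -
    have "w \<bullet> x = (transpose_mat Ri *\<^sub>v y) \<bullet> x" unfolding w_def Ris ..
    also have "\<dots> = y \<bullet> (Ri *\<^sub>v x)" by (rule transpose_vec_mult_scalar[OF Ri(1) x y])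
    finally show ?thesis unfolding y_def .
  qed
  have wSw: "w \<bullet> (\<Sigma> *\<^sub>v w) = y \<bullet> y"
  proof -
    have "\<Sigma> *\<^sub>v w = R *\<^sub>v (R *\<^sub>v w)" unfolding RR[symmetric] by (rule assoc_mult_mat_vec[OF Rc Rc w])
    also have "R *\<^sub>v w = y" unfolding w_def using assoc_mult_mat_vec[OF Rc Ri(1) y] Ri(2) y by simp
    finally have e: "\<Sigma> *\<^sub>v w = R *\<^sub>v y" .
    have "w \<bullet> (R *\<^sub>v y) = (transpose_mat Ri *\<^sub>v y) \<bullet> (R *\<^sub>v y)" unfolding w_def Ris ..
    also have "\<dots> = y \<bullet> (Ri *\<^sub>v (R *\<^sub>v y))" by (rule transpose_vec_mult_scalar[OF Ri(1) _ y]) (use Rc y in simp)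
    also have "Ri *\<^sub>v (R *\<^sub>v y) = y" using assoc_mult_mat_vec[OF Ri(1) Rc y] Ri(3) y by simp
    finally show ?thesis unfolding e .
  qed
  define a where "a = transpose_mat Sel *\<^sub>v w"
  have a: "a \<in> carrier_vec N" unfolding a_def using Selt w by simp
  have wx2: "w \<bullet> x = a \<bullet> z" unfolding xS a_def
    by (rule transpose_vec_mult_scalar[OF Sel z w, symmetric])
  have wSw2: "w \<bullet> (\<Sigma> *\<^sub>v w) = a \<bullet> (Pi *\<^sub>v a)" unfolding a_def by (rule \<Sigma>q[OF w])
  define c where "c = Pi *\<^sub>v a"
  have c: "c \<in> carrier_vec N" unfolding c_def using Pi a by simp
  have Pc_a: "P *\<^sub>v c = a" unfolding c_def using assoc_mult_mat_vec[OF Pc Pi(1) a] Pi(2) a by simp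
  have cs: "(c \<bullet> (P *\<^sub>v z))^2 \<le> (c \<bullet> (P *\<^sub>v c)) * (z \<bullet> (P *\<^sub>v z))" by (rule psd_cs[OF Ppsd c z])
  have c1: "c \<bullet> (P *\<^sub>v z) = a \<bullet> z"
  proof -
    have "c \<bullet> (P *\<^sub>v z) = z \<bullet> (P *\<^sub>v c)" by (rule psd_symm[OF Ppsd z c])
    also have "\<dots> = a \<bullet> z" unfolding Pc_a by (rule comm_scalar_prod[OF z a])
    finally show ?thesis .
  qed
  have c2: "c \<bullet> (P *\<^sub>v c) = a \<bullet> (Pi *\<^sub>v a)"
    unfolding Pc_a unfolding c_def by (rule comm_scalar_prod) (use Pi a in simp_all)
  have key: "(y \<bullet> y)^2 \<le> (y \<bullet> y) * (z \<bullet> (P *\<^sub>v z))"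
    using cs unfolding c1 c2 wx2[symmetric] wSw2[symmetric] wx wSw .
  have yy0: "y \<bullet> y \<ge> 0" by (rule self_nonneg)
  have "(y \<bullet> y) * (z \<bullet> (P *\<^sub>v z)) \<le> (y \<bullet> y) * \<rho>^2" using zP yy0 by (rule mult_left_mono)
  with key have key2: "(y \<bullet> y) * (y \<bullet> y) \<le> (y \<bullet> y) * \<rho>^2" by (simp add: power2_eq_square)
  have yy: "y \<bullet> y \<le> \<rho>^2"
  proof (cases "y \<bullet> y = 0")
    case True thus ?thesis by simp
  next
    case False
    hence "y \<bullet> y > 0" using yy0 by simp
    thus ?thesis using key2 by (simp add: mult_le_cancel_left_pos)
  qed
  have xRy: "x = R *\<^sub>v y"
    unfolding y_def using assoc_mult_mat_vec[OF Rc Ri(1) x] Ri(2) x by simp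
  show ?thesis
    unfolding ellipsoid_def x_def[symmetric] Sel_def[symmetric] Pi_def[symmetric] \<Sigma>_def[symmetric] R_def[symmetric]
  proof (cases "\<rho> = 0")
    case True
    hence "y \<bullet> y = 0" using yy yy0 by simp
    hence "y = 0\<^sub>v m" by (rule vec_self_zero[OF y])
    hence x0: "x = 0\<^sub>v m" unfolding xRy using Rc by (simp add: mat_vec_zero)
    show "x \<in> {0\<^sub>v m + \<rho> \<cdot>\<^sub>v (R *\<^sub>v u) |u. u \<in> carrier_vec m \<and> sqrt (u \<bullet> u) \<le> 1}"
      using True x0 Rc by (intro CollectI exI[of _ "0\<^sub>v m"]) (auto intro!: eq_vecI)
  next
    case False
    hence rp: "\<rho> > 0" using \<rho> by simp
    define u where "u = (1 / \<rho>) \<cdot>\<^sub>v y"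
    have u: "u \<in> carrier_vec m" unfolding u_def using y by simp
    have "u \<bullet> u = (1/\<rho>)^2 * (y \<bullet> y)" unfolding u_def using y by (simp add: power2_eq_square)
    also have "\<dots> \<le> (1/\<rho>)^2 * \<rho>^2" using yy by (rule mult_left_mono) simp
    also have "\<dots> = 1" using rp by (simp add: field_simps)
    finally have uu: "sqrt (u \<bullet> u) \<le> 1" by simp
    have "0\<^sub>v m + \<rho> \<cdot>\<^sub>v (R *\<^sub>v u) = x"
    proof -
      have "R *\<^sub>v u = (1/\<rho>) \<cdot>\<^sub>v x" unfolding u_def xRy using Rc y by (simp add: mult_mat_vec)
      hence "\<rho> \<cdot>\<^sub>v (R *\<^sub>v u) = x" using rp by (simp add: smult_smult_assoc)
      thus ?thesis using x by simp
    qed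
    thus "x \<in> {0\<^sub>v m + \<rho> \<cdot>\<^sub>v (R *\<^sub>v u) |u. u \<in> carrier_vec m \<and> sqrt (u \<bullet> u) \<le> 1}"
      using u uu by blast
  qed
qed



lemma sum_split_add: fixes a m :: nat and f :: "nat \<Rightarrow> 'a::comm_monoid_add"
  shows "(\<Sum>j<a+m. f j) = (\<Sum>j<a. f j) + (\<Sum>b<m. f (a+b))"
  by (induction m) (auto simp: ac_simps)

lemma sum_nm: fixes n m :: nat and f :: "nat \<Rightarrow> 'a::comm_monoid_add"
  shows "(\<Sum>j<n*m. f j) = (\<Sum>k<n. \<Sum>b<m. f (k*m+b))"
proof (induction n)
  case 0 thus ?case by simp
next
  case (Suc n)
  have "(\<Sum>j<Suc n * m. f j) = (\<Sum>j<n*m + m. f j)" by (simp add: add.commute)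
  also have "\<dots> = (\<Sum>j<n*m. f j) + (\<Sum>b<m. f (n*m+b))" by (rule sum_split_add)
  finally show ?case using Suc by simp
qed

lemma kron_companion_mult:
  fixes z :: "real vec"
  assumes z: "z \<in> carrier_vec (n*m)" and i: "i < n*m"
  shows "(kron (companion n lam) (1\<^sub>m m) *\<^sub>v z) $ i =
    (if Suc (i div m) < n then z $ (i + m) else - (\<Sum>k<n. kappa n lam k * z $ (k*m + i mod m)))"
proof -
  have m: "m > 0" using i by (cases m) auto
  define p where "p = i div m"
  define q where "q = i mod m"
  have p: "p < n" unfolding p_def using i m by (simp add: less_mult_imp_div_less)
  have q: "q < m" unfolding q_def using m by simp
  have ipq: "i = p*m + q" unfolding p_def q_def by simp
  define C where "C = companion n lam"
  have Cd: "dim_row C = n" "dim_col C = n" unfolding C_def companion_def by auto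
  have "(kron C (1\<^sub>m m) *\<^sub>v z) $ i = (\<Sum>j<n*m. C $$ (p, j div m) * (1\<^sub>m m :: real mat) $$ (q, j mod m) * z $ j)"
    using i z Cd unfolding kron_def p_def q_def
    by (simp add: scalar_prod_def row_def atLeast0LessThan)
  also have "\<dots> = (\<Sum>k<n. \<Sum>b<m. C $$ (p, (k*m+b) div m) * (1\<^sub>m m :: real mat) $$ (q, (k*m+b) mod m) * z $ (k*m+b))"
    by (rule sum_nm)
  also have "\<dots> = (\<Sum>k<n. \<Sum>b<m. if b = q then C $$ (p, k) * z $ (k*m+q) else 0)"
    using q m by (intro sum.cong refl) auto
  also have "\<dots> = (\<Sum>k<n. C $$ (p, k) * z $ (k*m+q))" using q by simp
  also have "\<dots> = (if Suc p < n then z $ (i + m) else - (\<Sum>k<n. kappa n lam k * z $ (k*m + q)))"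
  proof (cases "Suc p < n")
    case True
    have "(\<Sum>k<n. C $$ (p, k) * z $ (k*m+q)) = (\<Sum>k<n. if k = Suc p then z $ (k*m+q) else 0)"
      using True p unfolding C_def companion_def by (intro sum.cong refl) auto
    also have "\<dots> = z $ (Suc p * m + q)" using True by simp
    also have "Suc p * m + q = i + m" unfolding ipq by simp
    finally show ?thesis using True by simp
  next
    case False
    hence pn: "p = n - 1" using p by simp
    have "(\<Sum>k<n. C $$ (p, k) * z $ (k*m+q)) = (\<Sum>k<n. - (kappa n lam k * z $ (k*m+q)))"
      using pn p unfolding C_def companion_def by (intro sum.cong refl) auto
    thus ?thesis using False by (simp add: sum_negf)
  qed
  finally show ?thesis unfolding C_def p_def q_def .
qed

lemma lyap_nonpos:
  fixes A P D :: "real mat" and z :: "real vec"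
  assumes A: "A \<in> carrier_mat N N" and P: "P \<in> carrier_mat N N" and D: "D \<in> carrier_mat r N"
    and lyap: "transpose_mat A * P + P * A + transpose_mat D * D = 0\<^sub>m N N"
    and z: "z \<in> carrier_vec N"
  shows "(A *\<^sub>v z) \<bullet> (P *\<^sub>v z) + z \<bullet> (P *\<^sub>v (A *\<^sub>v z)) \<le> 0"
proof -
  have At: "transpose_mat A \<in> carrier_mat N N" using A by simp
  have Dt: "transpose_mat D \<in> carrier_mat N r" using D by simp
  have M1: "transpose_mat A * P \<in> carrier_mat N N" using At P by simp
  have M2: "P * A \<in> carrier_mat N N" using A P by simp
  have M3: "transpose_mat D * D \<in> carrier_mat N N" using Dt D by simp
  have Az: "A *\<^sub>v z \<in> carrier_vec N" and Pz: "P *\<^sub>v z \<in> carrier_vec N" and Dz: "D *\<^sub>v z \<in> carrier_vec r"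
    using A P D z by auto
  have e1: "(A *\<^sub>v z) \<bullet> (P *\<^sub>v z) = z \<bullet> ((transpose_mat A * P) *\<^sub>v z)"
  proof -
    have "(A *\<^sub>v z) \<bullet> (P *\<^sub>v z) = (P *\<^sub>v z) \<bullet> (A *\<^sub>v z)" by (rule comm_scalar_prod[OF Az Pz])
    also have "\<dots> = (transpose_mat A *\<^sub>v (P *\<^sub>v z)) \<bullet> z"
      by (rule transpose_vec_mult_scalar[OF A z Pz, symmetric])
    also have "\<dots> = z \<bullet> (transpose_mat A *\<^sub>v (P *\<^sub>v z))" by (rule comm_scalar_prod) (use At Pz z in auto)
    also have "transpose_mat A *\<^sub>v (P *\<^sub>v z) = (transpose_mat A * P) *\<^sub>v z"
      by (rule assoc_mult_mat_vec[OF At P z, symmetric])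
    finally show ?thesis .
  qed
  have e2: "z \<bullet> (P *\<^sub>v (A *\<^sub>v z)) = z \<bullet> ((P * A) *\<^sub>v z)"
    using assoc_mult_mat_vec[OF P A z] by simp
  have e3: "z \<bullet> ((transpose_mat D * D) *\<^sub>v z) = (D *\<^sub>v z) \<bullet> (D *\<^sub>v z)"
  proof -
    have "z \<bullet> ((transpose_mat D * D) *\<^sub>v z) = z \<bullet> (transpose_mat D *\<^sub>v (D *\<^sub>v z))"
      using assoc_mult_mat_vec[OF Dt D z] by simp
    also have "\<dots> = (transpose_mat D *\<^sub>v (D *\<^sub>v z)) \<bullet> z" by (rule comm_scalar_prod) (use Dt Dz z in auto)
    also have "\<dots> = (D *\<^sub>v z) \<bullet> (D *\<^sub>v z)" by (rule transpose_vec_mult_scalar[OF D z Dz])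
    finally show ?thesis .
  qed
  have "z \<bullet> ((transpose_mat A * P) *\<^sub>v z) + z \<bullet> ((P * A) *\<^sub>v z) + z \<bullet> ((transpose_mat D * D) *\<^sub>v z)
      = z \<bullet> ((transpose_mat A * P + P * A + transpose_mat D * D) *\<^sub>v z)"
    using M1 M2 M3 z
    by (simp add: add_mult_distrib_mat_vec[of _ N N] scalar_prod_add_distrib[of _ N])
  also have "\<dots> = 0" unfolding lyap using z by (simp add: scalar_prod_def)
  finally have "z \<bullet> ((transpose_mat A * P) *\<^sub>v z) + z \<bullet> ((P * A) *\<^sub>v z) = - ((D *\<^sub>v z) \<bullet> (D *\<^sub>v z))"
    unfolding e3 by simp
  thus ?thesis unfolding e1 e2 using self_nonneg[of "D *\<^sub>v z"] by simp
qed

lemma nonincr_within: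
  fixes V V' :: "real \<Rightarrow> real"
  assumes d: "\<And>s. s \<ge> 0 \<Longrightarrow> (V has_real_derivative V' s) (at s within {0..})"
    and neg: "\<And>s. s \<ge> 0 \<Longrightarrow> V' s \<le> 0" and t: "t \<ge> 0"
  shows "V t \<le> V 0"
proof (cases "t = 0")
  case True thus ?thesis by simp
next
  case False
  hence tp: "t > 0" using t by simp
  have dt: "(V has_real_derivative V' s) (at s within {0..t})" if "0 \<le> s" for s
    using d[OF that] by (rule DERIV_subset) auto
  show ?thesis
  proof (rule DERIV_nonpos_imp_decreasing_open[of 0 t V])
    show "0 \<le> t" using t .
    fix x assume x: "0 < x" "x < t"
    have "(V has_real_derivative V' x) (at x)"
      using dt[of x] x at_within_Icc_at[of 0 x t] by simp
    thus "\<exists>y. (V has_real_derivative y) (at x) \<and> y \<le> 0" using neg[of x] x by auto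
  next
    show "continuous_on {0..t} V"
      unfolding continuous_on_eq_continuous_within
    proof
      fix x assume "x \<in> {0..t}"
      hence "0 \<le> x" by simp
      from DERIV_continuous[OF dt[OF this]] show "continuous (at x within {0..t}) V" .
    qed
  qed
qed



theorem proposition12:
  fixes n m r :: nat
    and lam :: "nat \<Rightarrow> complex"
    and D P :: "real mat"
    and z0 :: "real vec"
    and xd :: "nat \<Rightarrow> nat \<Rightarrow> real \<Rightarrow> real"
  defines "A \<equiv> kron (companion n lam) (1\<^sub>m m)"
  assumes n_pos: "n \<ge> 1"
    and neg_re: "\<forall>i<n. Re (lam i) < 0"
    and real_coeffs: "\<forall>k. Im (coeff (charpoly_lam n lam) k) = 0"
    and D_dim: "D \<in> carrier_mat r (n * m)"
    and obs: "observable (n * m) A D"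
    and P_pd: "pos_def (n * m) P"
    and lyap: "transpose_mat A * P + P * A + transpose_mat D * D = 0\<^sub>m (n * m) (n * m)"
    and z0_dim: "z0 \<in> carrier_vec (n * m)"
    and deriv: "\<forall>k<n. \<forall>a<m. \<forall>t\<ge>0.
                  (xd k a has_real_derivative xd (Suc k) a t) (at t within {0..})"
    and ode: "\<forall>a<m. \<forall>t\<ge>0. xd n a t = - (\<Sum>k<n. kappa n lam k * xd k a t)"
    and init: "\<forall>k<n. \<forall>a<m. xd k a 0 = z0 $ (k * m + a)"
  shows "\<forall>t\<ge>0. vec m (\<lambda>a. xd 0 a t) \<in>
           ellipsoid m (0\<^sub>v m) (I_sel m (n * m) * mat_inv (n * m) P * transpose_mat (I_sel m (n * m)))
             (P_norm P z0)"
proof (intro allI impI)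
  fix t :: real assume t: "t \<ge> 0"
  define N where "N = n * m"
  have mN: "m \<le> N" unfolding N_def using n_pos by simp
  have Ac: "A \<in> carrier_mat N N" unfolding A_def N_def kron_def companion_def by simp
  have Pc: "P \<in> carrier_mat N N" using P_pd unfolding pos_def_def N_def by auto
  have divs: "i div m < n" "i mod m < m" "m > 0" if "i < N" for i
  proof -
    show m: "m > 0" using that unfolding N_def by (cases m) auto
    show "i div m < n" using that m unfolding N_def by (simp add: less_mult_imp_div_less)
    show "i mod m < m" using m by simp
  qed
  define f where "f i s = xd (i div m) (i mod m) s" for i s
  define zt where "zt s = vec N (\<lambda>i. f i s)" for s
  have zt: "zt s \<in> carrier_vec N" for s unfolding zt_def by simp
  have zt0: "zt 0 = z0"
  proof (rule eq_vecI)
    fix i assume "i < dim_vec z0"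
    hence i: "i < N" using z0_dim unfolding N_def by simp
    have "zt 0 $ i = z0 $ ((i div m) * m + i mod m)" unfolding zt_def f_def using i init divs[OF i] by simp
    thus "zt 0 $ i = z0 $ i" by simp
  qed (use z0_dim N_def zt_def in simp)
  have Azt: "(A *\<^sub>v zt s) $ i = xd (Suc (i div m)) (i mod m) s" if i: "i < N" and s: "s \<ge> 0" for i s
  proof -
    note d = divs[OF i]
    have "(A *\<^sub>v zt s) $ i = (if Suc (i div m) < n then zt s $ (i + m)
        else - (\<Sum>k<n. kappa n lam k * zt s $ (k*m + i mod m)))"
      unfolding A_def by (rule kron_companion_mult) (use zt i N_def in auto)
    also have "\<dots> = xd (Suc (i div m)) (i mod m) s"
    proof (cases "Suc (i div m) < n")
      case True
      have "i < Suc (i div m) * m"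
      proof -
        have "i = i div m * m + i mod m" by simp
        moreover have "Suc (i div m) * m = i div m * m + m" by simp
        ultimately show ?thesis using d(2) by linarith
      qed
      hence "i + m < Suc (Suc (i div m)) * m" by simp
      also have "\<dots> \<le> n * m" using True by (intro mult_le_mono1) simp
      finally have "i + m < N" unfolding N_def .
      moreover have "(i + m) div m = Suc (i div m)" "(i + m) mod m = i mod m" using d by auto
      ultimately show ?thesis using True unfolding zt_def f_def by simp
    next
      case False
      hence sn: "Suc (i div m) = n" using d by simp
      have "(\<Sum>k<n. kappa n lam k * zt s $ (k*m + i mod m)) = (\<Sum>k<n. kappa n lam k * xd k (i mod m) s)"
      proof (rule sum.cong[OF refl])
        fix k assume k: "k \<in> {..<n}"
        have "k * m + i mod m < Suc k * m" using d(2) by simp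
        also have "\<dots> \<le> n * m" using k by (intro mult_le_mono1) simp
        finally have kN: "k * m + i mod m < N" unfolding N_def .
        show "kappa n lam k * zt s $ (k*m + i mod m) = kappa n lam k * xd k (i mod m) s"
          using kN d unfolding zt_def f_def by simp
      qed
      thus ?thesis using False ode d s sn by simp
    qed
    finally show ?thesis .
  qed
  have fd: "(f i has_real_derivative (A *\<^sub>v zt s) $ i) (at s within {0..})" if i: "i < N" and s: "s \<ge> 0" for i s
    unfolding Azt[OF i s] f_def using deriv divs[OF i] s by auto
  define V where "V s = (\<Sum>i<N. \<Sum>j<N. f i s * (P $$ (i,j) * f j s))" for s
  define V' where "V' s = (\<Sum>i<N. \<Sum>j<N. f i s * (P $$ (i,j) * (A *\<^sub>v zt s) $ j)
                        + (A *\<^sub>v zt s) $ i * (P $$ (i,j) * f j s))" for s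
  have Vd: "(V has_real_derivative V' s) (at s within {0..})" if s: "s \<ge> 0" for s
    unfolding V_def[abs_def] V'_def
    by (intro DERIV_sum DERIV_mult' DERIV_cmult fd s) auto
  have Vq: "V s = zt s \<bullet> (P *\<^sub>v zt s)" for s
    unfolding V_def zt_def using Pc
    by (simp add: scalar_prod_def row_def atLeast0LessThan sum_distrib_left)
  have V'q: "V' s = (A *\<^sub>v zt s) \<bullet> (P *\<^sub>v zt s) + zt s \<bullet> (P *\<^sub>v (A *\<^sub>v zt s))" for s
  proof -
    have AzN: "dim_vec (A *\<^sub>v zt s) = N" using Ac by simp
    have "V' s = (\<Sum>i<N. \<Sum>j<N. (A *\<^sub>v zt s) $ i * (P $$ (i,j) * f j s))
               + (\<Sum>i<N. \<Sum>j<N. f i s * (P $$ (i,j) * (A *\<^sub>v zt s) $ j))"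
      unfolding V'_def by (simp add: sum.distrib)
    also have "\<dots> = (A *\<^sub>v zt s) \<bullet> (P *\<^sub>v zt s) + zt s \<bullet> (P *\<^sub>v (A *\<^sub>v zt s))"
      unfolding zt_def using Pc AzN
      by (simp add: scalar_prod_def row_def atLeast0LessThan sum_distrib_left)
    finally show ?thesis .
  qed
  have V'n: "V' s \<le> 0" for s
    unfolding V'q by (rule lyap_nonpos[OF Ac Pc _ _ zt]) (use D_dim lyap N_def in auto)
  have "V t \<le> V 0" by (rule nonincr_within[OF Vd V'n t])
  hence zP: "zt t \<bullet> (P *\<^sub>v zt t) \<le> z0 \<bullet> (P *\<^sub>v z0)" unfolding Vq zt0 .
  have nn: "z0 \<bullet> (P *\<^sub>v z0) \<ge> 0" using pd_psd[OF P_pd] z0_dim unfolding pos_semidef_def by auto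
  have rho: "(P_norm P z0)^2 = z0 \<bullet> (P *\<^sub>v z0)" "P_norm P z0 \<ge> 0"
    unfolding P_norm_def using nn by auto
  have "vec m (\<lambda>a. zt t $ a) \<in> ellipsoid m (0\<^sub>v m) (I_sel m N * mat_inv N P * transpose_mat (I_sel m N)) (P_norm P z0)"
    by (rule ellip_mem[OF _ mN zt]) (use P_pd N_def zP rho in auto)
  moreover have "vec m (\<lambda>a. zt t $ a) = vec m (\<lambda>a. xd 0 a t)"
    using mN by (intro eq_vecI) (auto simp: zt_def f_def)
  ultimately show "vec m (\<lambda>a. xd 0 a t) \<in>
           ellipsoid m (0\<^sub>v m) (I_sel m (n * m) * mat_inv (n * m) P * transpose_mat (I_sel m (n * m)))
             (P_norm P z0)" unfolding N_def by simp
qed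


end
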